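(* Let $P_n$ be the path on $n$ vertices. (1) If $n$ is even, then $\mathcal{Z}^{\mathrm{TE}}_-(P_n)=\mathcal{Z}^{\mathrm{TS}}_-(P_n)\cong K_1$. (2) If $n$ is odd, then $\mathcal{Z}^{\mathrm{TE}}_-(P_n)\cong K_{(n+1)/2}$ and $\mathcal{Z}^{\mathrm{TS}}_-(P_n)\cong \frac{n+1}{2}K_1$ (the edgeless graph on $(n+1)/2$ vertices).
   Context: Skew forcing: vertices are colored blue or white; if any vertex $u$ (blue or white) has exactly one white neighbor $v$, then $u$ may force $v$ to become blue. A skew forcing set is a (possibly empty) set of initially blue vertices from which repeated application of this rule turns every vertex blue; $\mathrm{Z}_-(G)$ is the minimum size of a skew forcing set. $\mathcal{Z}^{\mathrm{TE}}_-(G)$ has as vertices the minimum skew forcing sets of $G$, with $S_1S_2$ an edge iff $S_1\setminus S_2=\{v_1\}$ and $S_2\setminus S_1=\{v_2\}$ for some vertices $v_1,v_2$; $\mathcal{Z}^{\mathrm{TS}}_-(G)$ has the same vertices with the additional requirement $v_1v_2\in E(G)$. *)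

theory Defs
  imports Main
begin

text \<open>Simple graphs are given by a vertex set V and a symmetric irreflexive
adjacency relation E (only its restriction to V matters).\<close>

definition skew_force_step :: "'a set \<Rightarrow> ('a \<Rightarrow> 'a \<Rightarrow> bool) \<Rightarrow> 'a set \<Rightarrow> 'a set \<Rightarrow> bool" where
  "skew_force_step V E B B' \<longleftrightarrow>
     (\<exists>u\<in>V. \<exists>v. {w\<in>V. E u w \<and> w \<notin> B} = {v} \<and> B' = insert v B)"

definition skew_forcing_set :: "'a set \<Rightarrow> ('a \<Rightarrow> 'a \<Rightarrow> bool) \<Rightarrow> 'a set \<Rightarrow> bool" where
  "skew_forcing_set V E S \<longleftrightarrow> S \<subseteq> V \<and> (skew_force_step V E)\<^sup>*\<^sup>* S V"

definition skew_Z :: "'a set \<Rightarrow> ('a \<Rightarrow> 'a \<Rightarrow> bool) \<Rightarrow> nat" where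
  "skew_Z V E = (LEAST k. \<exists>S. skew_forcing_set V E S \<and> card S = k)"

definition min_skew_forcing_sets :: "'a set \<Rightarrow> ('a \<Rightarrow> 'a \<Rightarrow> bool) \<Rightarrow> 'a set set" where
  "min_skew_forcing_sets V E = {S. skew_forcing_set V E S \<and> card S = skew_Z V E}"

definition TE_adj :: "'a set \<Rightarrow> 'a set \<Rightarrow> bool" where
  "TE_adj S1 S2 \<longleftrightarrow> (\<exists>v1 v2. S1 - S2 = {v1} \<and> S2 - S1 = {v2})"

definition TS_adj :: "('a \<Rightarrow> 'a \<Rightarrow> bool) \<Rightarrow> 'a set \<Rightarrow> 'a set \<Rightarrow> bool" where
  "TS_adj E S1 S2 \<longleftrightarrow> (\<exists>v1 v2. S1 - S2 = {v1} \<and> S2 - S1 = {v2} \<and> E v1 v2)"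

definition graph_iso :: "'a set \<Rightarrow> ('a \<Rightarrow> 'a \<Rightarrow> bool) \<Rightarrow> 'b set \<Rightarrow> ('b \<Rightarrow> 'b \<Rightarrow> bool) \<Rightarrow> bool" where
  "graph_iso V1 E1 V2 E2 \<longleftrightarrow>
     (\<exists>f. bij_betw f V1 V2 \<and> (\<forall>x\<in>V1. \<forall>y\<in>V1. E1 x y \<longleftrightarrow> E2 (f x) (f y)))"

definition complete_adj :: "nat \<Rightarrow> nat \<Rightarrow> bool" where
  "complete_adj x y \<longleftrightarrow> x \<noteq> y"

definition empty_adj :: "nat \<Rightarrow> nat \<Rightarrow> bool" where
  "empty_adj x y \<longleftrightarrow> False"

definition path_adj :: "nat \<Rightarrow> nat \<Rightarrow> bool" where
  "path_adj i j \<longleftrightarrow> i = Suc j \<or> j = Suc i"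

end

theory Submission
  imports Defs
begin

abbreviation "PS n \<equiv> skew_force_step {0..<n} path_adj"

lemma mono_reach:
  assumes "(skew_force_step V E)\<^sup>*\<^sup>* B V" "B \<subseteq> B'" "B' \<subseteq> V"
  shows "(skew_force_step V E)\<^sup>*\<^sup>* B' V"
  using assms
proof (induction B arbitrary: B' rule: converse_rtranclp_induct)
  case base
  then show ?case by auto
next
  case (step B C)
  from step.hyps(1) obtain u v where u: "u \<in> V" and W: "{w\<in>V. E u w \<and> w \<notin> B} = {v}"
    and C: "C = insert v B" unfolding skew_force_step_def by blast
  have vV: "v \<in> V" and Euv: "E u v" and vB: "v \<notin> B" using W by auto
  show ?case
  proof (cases "v \<in> B'")
    case True
    then show ?thesis using step C by auto
  next
    case False
    have "{w\<in>V. E u w \<and> w \<notin> B'} = {v}" using W False vV Euv step.prems(1) by blast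
    then have "skew_force_step V E B' (insert v B')" unfolding skew_force_step_def using u by blast
    moreover have "(skew_force_step V E)\<^sup>*\<^sup>* (insert v B') V"
      using step.IH[of "insert v B'"] C step.prems vV by auto
    ultimately show ?thesis by (rule converse_rtranclp_into_rtranclp)
  qed
qed

lemma step_intro:
  "u < n \<Longrightarrow> {w\<in>{0..<n}. path_adj u w \<and> w \<notin> B} = {v} \<Longrightarrow> PS n B (insert v B)"
  unfolding skew_force_step_def by (rule bexI[where x=u]) auto

lemma inv_odd:
  assumes "(PS n)\<^sup>*\<^sup>* B C" "odd n" "\<forall>x\<in>B. x < n \<longrightarrow> odd x"
  shows "\<forall>x\<in>C. x < n \<longrightarrow> odd x"
  using assms(1,3)
proof (induction rule: rtranclp_induct)
  case base
  then show ?case by simp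
next
  case (step C D)
  from step.hyps(2) obtain u v where u0: "u \<in> {0..<n}" and W: "{w\<in>{0..<n}. path_adj u w \<and> w \<notin> C} = {v}"
    and D: "D = insert v C" unfolding skew_force_step_def by blast
  have u: "u < n" using u0 by simp
  have IH: "\<forall>x\<in>C. x < n \<longrightarrow> odd x" using step.IH step.prems by simp
  have vW: "v \<in> {w\<in>{0..<n}. path_adj u w \<and> w \<notin> C}" using W by simp
  then have vn: "v < n" and Euv: "path_adj u v" by simp_all
  have "odd v"
  proof (rule ccontr)
    assume ev: "\<not> odd v"
    have "u = Suc v \<or> v = Suc u" using Euv unfolding path_adj_def by simp
    then have ou: "odd u" using ev by auto
    then have u1: "u \<ge> 1" by (cases u) auto
    have e1: "even (u+1)" using ou by simp
    have "u + 1 \<noteq> n" using e1 assms(2) by auto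
    then have un: "u + 1 < n" using u by simp
    have e2: "even (u-1)" using ou u1 by simp
    have "u + 1 \<notin> C" using IH un e1 by blast
    then have a: "u + 1 \<in> {w\<in>{0..<n}. path_adj u w \<and> w \<notin> C}"
      using un unfolding path_adj_def by simp
    have "u - 1 < n" using u by simp
    moreover have "u - 1 \<notin> C" using IH e2 calculation by blast
    ultimately have b: "u - 1 \<in> {w\<in>{0..<n}. path_adj u w \<and> w \<notin> C}"
      using u1 unfolding path_adj_def by simp
    have "u + 1 = v" using a W by blast
    moreover have "u - 1 = v" using b W by blast
    ultimately show False using u1 by simp
  qed
  then show ?case using IH D vn by simp
qed

lemma sweep:
  assumes "m \<le> n" "\<forall>x\<in>X. m \<le> x \<and> x < n"
  shows "2*j \<le> m \<Longrightarrow> (PS n)\<^sup>*\<^sup>* X (X \<union> {i. odd i \<and> i < 2*j})"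
proof (induction j)
  case 0
  then show ?case by simp
next
  case (Suc j)
  let ?B = "X \<union> {i. odd i \<and> i < 2*j}"
  have lt: "2*j+1 < m" using Suc.prems by simp
  have IH: "(PS n)\<^sup>*\<^sup>* X ?B" using Suc.IH Suc.prems by simp
  have W: "{w\<in>{0..<n}. path_adj (2*j) w \<and> w \<notin> ?B} = {2*j+1}"
  proof (rule set_eqI, rule iffI)
    fix w assume w: "w \<in> {w\<in>{0..<n}. path_adj (2*j) w \<and> w \<notin> ?B}"
    then have "2*j = Suc w \<or> w = Suc (2*j)" "w \<notin> ?B" unfolding path_adj_def by simp_all
    moreover have "w \<in> ?B" if h: "2*j = Suc w"
    proof -
      have "odd w" using h by presburger
      moreover have "w < 2*j" using h by simp
      ultimately show ?thesis by simp
    qed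
    ultimately show "w \<in> {2*j+1}" by auto
  next
    fix w assume "w \<in> {2*j+1}"
    then have w: "w = 2*j+1" by simp
    have "w \<notin> X" using assms(2) lt w by auto
    moreover have "w \<notin> {i. odd i \<and> i < 2*j}" using w by simp
    moreover have "w < n" using lt assms(1) w by simp
    ultimately show "w \<in> {w\<in>{0..<n}. path_adj (2*j) w \<and> w \<notin> ?B}"
      using w unfolding path_adj_def by simp
  qed
  have "PS n ?B (insert (2*j+1) ?B)"
    by (rule step_intro[OF _ W]) (use lt assms(1) in simp)
  moreover have "insert (2*j+1) ?B = X \<union> {i. odd i \<and> i < 2*Suc j}"
  proof -
    have "{i. odd i \<and> i < 2*Suc j} = insert (2*j+1) {i. odd i \<and> i < 2*j}"
    proof (rule set_eqI)
      fix i show "i \<in> {i. odd i \<and> i < 2*Suc j} \<longleftrightarrow> i \<in> insert (2*j+1) {i. odd i \<and> i < 2*j}"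
        by simp presburger
    qed
    then show ?thesis by blast
  qed
  ultimately show ?case using IH by (metis rtranclp.rtrancl_into_rtrancl)
qed

lemma right_ext:
  "d + i + 1 < n \<Longrightarrow> (PS n)\<^sup>*\<^sup>* {i..i+1} {i..i+1+d}"
proof (induction d)
  case 0
  then show ?case by simp
next
  case (Suc d)
  let ?u = "i+1+d"
  have W: "{w\<in>{0..<n}. path_adj ?u w \<and> w \<notin> {i..?u}} = {?u+1}"
    using Suc.prems unfolding path_adj_def by auto
  have "PS n {i..?u} (insert (?u+1) {i..?u})"
    by (rule step_intro) (use Suc.prems W in auto)
  moreover have "insert (?u+1) {i..?u} = {i..i+1+Suc d}" by auto
  ultimately show ?case using Suc by (metis Suc_lessD add_Suc rtranclp.rtrancl_into_rtrancl)
qed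

lemma left_ext:
  "i + 1 < n \<Longrightarrow> (PS n)\<^sup>*\<^sup>* {i..<n} {0..<n}"
proof (induction i)
  case 0
  then show ?case by simp
next
  case (Suc i)
  have W: "{w\<in>{0..<n}. path_adj (Suc i) w \<and> w \<notin> {Suc i..<n}} = {i}"
    using Suc.prems unfolding path_adj_def by auto
  have "PS n {Suc i..<n} (insert i {Suc i..<n})"
    by (rule step_intro) (use Suc.prems W in auto)
  moreover have "insert i {Suc i..<n} = {i..<n}" using Suc.prems by auto
  moreover have "(PS n)\<^sup>*\<^sup>* {i..<n} {0..<n}" using Suc.IH Suc.prems by simp
  ultimately show ?case by (metis converse_rtranclp_into_rtranclp)
qed

lemma pair_reach:
  assumes "i + 1 < n" "i \<in> B" "i+1 \<in> B" "B \<subseteq> {0..<n}"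
  shows "(PS n)\<^sup>*\<^sup>* B {0..<n}"
proof -
  have "(PS n)\<^sup>*\<^sup>* {i..i+1} {i..i+1+(n-i-2)}" by (rule right_ext) (use assms in auto)
  moreover have "{i..i+1+(n-i-2)} = {i..<n}" using assms(1) by auto
  ultimately have "(PS n)\<^sup>*\<^sup>* {i..i+1} {0..<n}" using left_ext[OF assms(1)] by auto
  moreover have "{i..i+1} = {i, i+1}" by auto
  ultimately show ?thesis using mono_reach[of "{0..<n}" path_adj] assms by (metis empty_subsetI insert_subset)
qed

lemma even_reach:
  assumes "even n"
  shows "(PS n)\<^sup>*\<^sup>* {} {0..<n}"
proof (cases "n = 0")
  case True
  then show ?thesis by simp
next
  case False
  then have n2: "n \<ge> 2" using assms by presburger
  let ?O = "{i. odd i \<and> i < n}"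
  have "(PS n)\<^sup>*\<^sup>* {} ({} \<union> {i. odd i \<and> i < 2*(n div 2)})"
    by (rule sweep[of n n]) auto
  then have r1: "(PS n)\<^sup>*\<^sup>* {} ?O" using assms by simp
  have W: "{w\<in>{0..<n}. path_adj (n-1) w \<and> w \<notin> ?O} = {n-2}"
    using n2 assms unfolding path_adj_def by (auto; presburger)
  have "PS n ?O (insert (n-2) ?O)"
    by (rule step_intro) (use n2 W in auto)
  moreover have "(PS n)\<^sup>*\<^sup>* (insert (n-2) ?O) {0..<n}"
  proof (rule pair_reach[of "n-2"])
    show "n - 2 + 1 \<in> insert (n - 2) ?O" using n2 assms by (auto; presburger)
  qed (use n2 in auto)
  ultimately show ?thesis using r1 by (meson converse_rtranclp_into_rtranclp rtranclp_trans)
qed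

lemma odd_reach:
  assumes "odd n" "even v" "v < n"
  shows "(PS n)\<^sup>*\<^sup>* {v} {0..<n}"
proof (cases "v = 0")
  case True
  show ?thesis
  proof (cases "n = 1")
    case True
    then show ?thesis using \<open>v = 0\<close> by auto
  next
    case False
    then have n3: "n \<ge> 2" using assms by presburger
    have W: "{w\<in>{0..<n}. path_adj 0 w \<and> w \<notin> {0}} = {1}"
      using n3 unfolding path_adj_def by auto
    have "PS n {0} (insert 1 {0})"
      by (rule step_intro) (use n3 W in auto)
    moreover have "(PS n)\<^sup>*\<^sup>* (insert 1 {0}) {0..<n}"
      by (rule pair_reach[of 0]) (use n3 in auto)
    ultimately show ?thesis using True by (meson converse_rtranclp_into_rtranclp)
  qed
next
  case False
  then have v2: "v \<ge> 2" using assms by presburger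
  have "(PS n)\<^sup>*\<^sup>* {v} ({v} \<union> {i. odd i \<and> i < 2*(v div 2)})"
    by (rule sweep[of v n]) (use assms in auto)
  moreover have "(PS n)\<^sup>*\<^sup>* ({v} \<union> {i. odd i \<and> i < 2*(v div 2)}) {0..<n}"
  proof (rule pair_reach[of "v-1"])
    show "v - 1 \<in> {v} \<union> {i. odd i \<and> i < 2*(v div 2)}" using v2 assms by (auto; presburger)
  qed (use v2 assms in auto)
  ultimately show ?thesis by (rule rtranclp_trans)
qed

lemma odd_noreach:
  assumes "odd n" "\<forall>x\<in>S. odd x"
  shows "\<not> (PS n)\<^sup>*\<^sup>* S {0..<n}"
proof
  assume a: "(PS n)\<^sup>*\<^sup>* S {0..<n}"
  have h: "\<forall>x\<in>S. x < n \<longrightarrow> odd x" using assms(2) by blast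
  have hh: "\<forall>x\<in>{0..<n}. x < n \<longrightarrow> odd x" using inv_odd[OF a assms(1) h] .
  have "0 < n" using assms(1) by presburger
  then have "odd (0::nat)" using hh[rule_format, of 0] by simp
  then show False by simp
qed

lemma M_even:
  assumes "even n"
  shows "min_skew_forcing_sets {0..<n} path_adj = {{}}"
proof -
  have f: "skew_forcing_set {0..<n} path_adj {}"
    unfolding skew_forcing_set_def using even_reach[OF assms] by blast
  have ex: "\<exists>S. skew_forcing_set {0..<n} path_adj S \<and> card S = 0"
    using f by (intro exI[of _ "{}"]) simp
  have Z: "skew_Z {0..<n} path_adj = 0"
    unfolding skew_Z_def using ex by (rule Least_eq_0)
  show ?thesis
  proof (rule set_eqI)
    fix S
    show "S \<in> min_skew_forcing_sets {0..<n} path_adj \<longleftrightarrow> S \<in> {{}}"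
    proof
      assume "S \<in> min_skew_forcing_sets {0..<n} path_adj"
      then have s: "S \<subseteq> {0..<n}" "card S = 0"
        unfolding min_skew_forcing_sets_def skew_forcing_set_def Z by simp_all
      have "finite S" using s(1) finite_subset by blast
      then have "S = {}" using s(2) by simp
      then show "S \<in> {{}}" by simp
    next
      assume "S \<in> {{}}"
      then have "S = {}" by simp
      then show "S \<in> min_skew_forcing_sets {0..<n} path_adj"
        unfolding min_skew_forcing_sets_def Z using f by simp
    qed
  qed
qed

lemma M_odd:
  assumes "odd n"
  shows "min_skew_forcing_sets {0..<n} path_adj = {{v} | v. v < n \<and> even v}"
proof -
  have fo: "skew_forcing_set {0..<n} path_adj {v} \<longleftrightarrow> v < n \<and> even v" for v
  proof
    assume h: "skew_forcing_set {0..<n} path_adj {v}"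
    then have r: "(PS n)\<^sup>*\<^sup>* {v} {0..<n}" and "v < n" unfolding skew_forcing_set_def by simp_all
    moreover have "even v"
    proof (rule ccontr)
      assume "\<not> even v"
      then have "\<forall>x\<in>{v}. odd x" by simp
      from odd_noreach[OF assms this] r show False by simp
    qed
    ultimately show "v < n \<and> even v" by simp
  next
    assume "v < n \<and> even v"
    then have "(PS n)\<^sup>*\<^sup>* {v} {0..<n}" using odd_reach[OF assms] by simp
    then show "skew_forcing_set {0..<n} path_adj {v}"
      unfolding skew_forcing_set_def using \<open>v < n \<and> even v\<close> by simp
  qed
  have n0: "0 < n" using assms by presburger
  have f0: "skew_forcing_set {0..<n} path_adj {0}" using fo n0 by simp
  have Z: "skew_Z {0..<n} path_adj = 1"
    unfolding skew_Z_def
  proof (rule Least_equality)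
    show "\<exists>S. skew_forcing_set {0..<n} path_adj S \<and> card S = 1"
      using f0 by (intro exI[of _ "{0}"]) simp
  next
    fix k assume "\<exists>S. skew_forcing_set {0..<n} path_adj S \<and> card S = k"
    then obtain S where S: "skew_forcing_set {0..<n} path_adj S" "card S = k" by blast
    show "1 \<le> k"
    proof (rule ccontr)
      assume "\<not> 1 \<le> k"
      then have c: "card S = 0" using S(2) by simp
      have "S \<subseteq> {0..<n}" using S(1) unfolding skew_forcing_set_def by simp
      then have "finite S" using finite_subset by blast
      then have "S = {}" using c by simp
      then have "(PS n)\<^sup>*\<^sup>* {} {0..<n}" using S(1) unfolding skew_forcing_set_def by simp
      moreover have "\<not> (PS n)\<^sup>*\<^sup>* {} {0..<n}" using odd_noreach[OF assms, of "{}"] by simp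
      ultimately show False by simp
    qed
  qed
  show ?thesis
  proof (rule set_eqI)
    fix S
    show "S \<in> min_skew_forcing_sets {0..<n} path_adj \<longleftrightarrow> S \<in> {{v} | v. v < n \<and> even v}"
    proof
      assume "S \<in> min_skew_forcing_sets {0..<n} path_adj"
      then have a: "skew_forcing_set {0..<n} path_adj S" "card S = 1"
        unfolding min_skew_forcing_sets_def Z by simp_all
      then obtain v where v: "S = {v}" by (meson card_1_singletonE)
      then have "v < n \<and> even v" using a(1) fo by simp
      then show "S \<in> {{v} | v. v < n \<and> even v}" using v by blast
    next
      assume "S \<in> {{v} | v. v < n \<and> even v}"
      then obtain v where v: "S = {v}" "v < n \<and> even v" by blast
      then have "skew_forcing_set {0..<n} path_adj S" using fo by simp
      then show "S \<in> min_skew_forcing_sets {0..<n} path_adj"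
        unfolding min_skew_forcing_sets_def Z using v by simp
    qed
  qed
qed

lemma TE_single: "TE_adj {a} {c} \<longleftrightarrow> a \<noteq> c"
  unfolding TE_adj_def by auto

lemma TS_single_even: "even a \<Longrightarrow> even c \<Longrightarrow> \<not> TS_adj path_adj {a} {c}"
proof
  assume ea: "even a" and ec: "even c" and "TS_adj path_adj {a} {c}"
  then obtain v1 v2 where h: "{a} - {c} = {v1}" "{c} - {a} = {v2}" "path_adj v1 v2"
    unfolding TS_adj_def by blast
  have "v1 = a" "v2 = c" using h(1,2) by blast+
  then have "a = Suc c \<or> c = Suc a" using h(3) unfolding path_adj_def by simp
  then show False using ea ec by auto
qed

lemma half_inj: "even (a::nat) \<Longrightarrow> even c \<Longrightarrow> a div 2 = c div 2 \<longleftrightarrow> a = c"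
  by (metis dvd_mult_div_cancel)

lemma l1: "even (v::nat) \<Longrightarrow> {2 * (the_elem {v} div 2)} = {v}" by simp
lemma l2: "(v::nat) < n \<Longrightarrow> even v \<Longrightarrow> v div 2 < (n+1) div 2" by presburger
lemma l3: "odd (n::nat) \<Longrightarrow> a < (n+1) div 2 \<Longrightarrow> 2*a < n" by presburger

lemma bij_half:
  assumes o: "odd (n::nat)"
  shows "bij_betw (\<lambda>S. the_elem S div 2) {{v} | v. v < n \<and> even v} {0..<(n+1) div 2}"
proof (rule bij_betw_byWitness[where f'="\<lambda>a. {2*a}"])
  show "\<forall>S\<in>{{v} | v. v < n \<and> even v}. {2 * (the_elem S div 2)} = S"
  proof
    fix S assume "S \<in> {{v} | v. v < n \<and> even v}"
    then obtain v where v: "S = {v}" "even v" by blast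
    then show "{2 * (the_elem S div 2)} = S" using l1 by simp
  qed
  show "\<forall>a\<in>{0..<(n+1) div 2}. the_elem {2*a} div 2 = a" by simp
  show "(\<lambda>S. the_elem S div 2) ` {{v} | v. v < n \<and> even v} \<subseteq> {0..<(n+1) div 2}"
  proof
    fix x assume "x \<in> (\<lambda>S. the_elem S div 2) ` {{v} | v. v < n \<and> even v}"
    then obtain S where S: "S \<in> {{v} | v. v < n \<and> even v}" "x = the_elem S div 2" by (rule imageE)
    from S(1) obtain v where "S = {v}" "v < n" "even v" by blast
    then have v: "x = the_elem {v} div 2" "v < n" "even v" using S(2) by simp_all
    then show "x \<in> {0..<(n+1) div 2}" using l2 by simp
  qed
  show "(\<lambda>a. {2*a}) ` {0..<(n+1) div 2} \<subseteq> {{v} | v. v < n \<and> even v}"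
  proof
    fix x assume "x \<in> (\<lambda>a. {2*a}) ` {0..<(n+1) div 2}"
    then obtain a where a: "a < (n+1) div 2" "x = {2*a}" by auto
    have "2*a < n" using l3[OF o a(1)] .
    moreover have "even (2*a)" by simp
    ultimately have "2*a < n \<and> even (2*a)" by simp
    then show "x \<in> {{v} | v. v < n \<and> even v}" using a(2) by blast
  qed
qed
theorem theorem5p7:
  fixes n :: nat
  defines "M \<equiv> min_skew_forcing_sets {0..<n} path_adj"
  shows "(even n \<longrightarrow>
           (\<forall>S1\<in>M. \<forall>S2\<in>M. TE_adj S1 S2 \<longleftrightarrow> TS_adj path_adj S1 S2) \<and>
           graph_iso M TE_adj {0..<1} complete_adj \<and>
           graph_iso M (TS_adj path_adj) {0..<1} complete_adj) \<and>
         (odd n \<longrightarrow>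
           graph_iso M TE_adj {0..<(n+1) div 2} complete_adj \<and>
           graph_iso M (TS_adj path_adj) {0..<(n+1) div 2} empty_adj)"
proof (intro conjI impI)
  assume e: "even n"
  have M: "M = {{}}" using M_even[OF e] M_def by simp
  have b: "bij_betw (\<lambda>_. 0::nat) M {0..<1}" unfolding M by (simp add: bij_betw_def)
  have t1: "\<not> TE_adj {} {}" unfolding TE_adj_def by blast
  have t2: "\<not> TS_adj path_adj {} {}" unfolding TS_adj_def by blast
  show "\<forall>S1\<in>M. \<forall>S2\<in>M. TE_adj S1 S2 \<longleftrightarrow> TS_adj path_adj S1 S2"
    unfolding M using t1 t2 by simp
  show "graph_iso M TE_adj {0..<1} complete_adj"
    unfolding graph_iso_def using b t1 by (intro exI[of _ "\<lambda>_. 0::nat"]) (simp add: M complete_adj_def)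
  show "graph_iso M (TS_adj path_adj) {0..<1} complete_adj"
    unfolding graph_iso_def using b t2 by (intro exI[of _ "\<lambda>_. 0::nat"]) (simp add: M complete_adj_def)
next
  assume o: "odd n"
  have M: "M = {{v} | v. v < n \<and> even v}" using M_odd[OF o] M_def by simp
  let ?f = "\<lambda>S. the_elem S div 2"
  have b: "bij_betw ?f M {0..<(n+1) div 2}" unfolding M by (rule bij_half[OF o])
  show "graph_iso M TE_adj {0..<(n+1) div 2} complete_adj"
    unfolding graph_iso_def
  proof (intro exI[of _ ?f] conjI ballI)
    fix x y assume "x \<in> M" "y \<in> M"
    then obtain a c where ac: "x = {a}" "y = {c}" "even a" "even c" unfolding M by blast
    show "TE_adj x y \<longleftrightarrow> complete_adj (?f x) (?f y)"
      unfolding complete_adj_def ac TE_single using half_inj[OF ac(3,4)] by simp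
  qed (rule b)
  show "graph_iso M (TS_adj path_adj) {0..<(n+1) div 2} empty_adj"
    unfolding graph_iso_def
  proof (intro exI[of _ ?f] conjI ballI)
    fix x y assume "x \<in> M" "y \<in> M"
    then obtain a c where ac: "x = {a}" "y = {c}" "even a" "even c" unfolding M by blast
    show "TS_adj path_adj x y \<longleftrightarrow> empty_adj (?f x) (?f y)"
      unfolding empty_adj_def ac using TS_single_even[OF ac(3,4)] by simp
  qed (rule b)
qed

end
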